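(* Let $G=(V,E)$ be a finite graph with positive edge weight function $m$. Suppose there is a constant $0\le\beta<1$ such that for every $v\in V$, $m(v)\ge\left(\max_{e'\in E}m(e')\right)(1-\beta)|V|$. Then $h_G\ge1-2\beta$, i.e., $G$ is a $2\beta$-expander.
   Context: For a finite graph $G=(V,E)$ with positive edge weights $m:E\to\mathbb{R}_{>0}$, set $m(v)=\sum_{e\in E,\ v\in e}m(e)$, $m(U)=\sum_{v\in U}m(v)$, and $m(U_1,U_2)=\sum_{(u_1,u_2)\in U_1\times U_2,\ \{u_1,u_2\}\in E}m(\{u_1,u_2\})$. The (generalized) Cheeger constant is $h_G=\min_{\emptyset\neq U\subsetneq V}\frac{m(U,V\setminus U)\,m(V)}{m(U)\,m(V\setminus U)}$. $G$ is a $\lambda$-expander if $1-h_G\le\lambda$. *)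

theory Defs
  imports Main "HOL-Library.FuncSet" Complex_Main
begin

definition finite_graph :: "'a set \<Rightarrow> 'a set set \<Rightarrow> bool" where
  "finite_graph V E \<longleftrightarrow> finite V \<and> (\<forall>e\<in>E. \<exists>u v. u \<in> V \<and> v \<in> V \<and> u \<noteq> v \<and> e = {u, v})"

definition wdeg :: "'a set set \<Rightarrow> ('a set \<Rightarrow> real) \<Rightarrow> 'a \<Rightarrow> real" where
  "wdeg E m v = (\<Sum>e\<in>{e\<in>E. v \<in> e}. m e)"

definition wvol :: "'a set set \<Rightarrow> ('a set \<Rightarrow> real) \<Rightarrow> 'a set \<Rightarrow> real" where
  "wvol E m U = (\<Sum>v\<in>U. wdeg E m v)"

definition wcut :: "'a set set \<Rightarrow> ('a set \<Rightarrow> real) \<Rightarrow> 'a set \<Rightarrow> 'a set \<Rightarrow> real" where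
  "wcut E m U1 U2 = (\<Sum>p\<in>{p\<in>U1 \<times> U2. {fst p, snd p} \<in> E}. m {fst p, snd p})"

definition cheeger :: "'a set \<Rightarrow> 'a set set \<Rightarrow> ('a set \<Rightarrow> real) \<Rightarrow> real" where
  "cheeger V E m = Min ((\<lambda>U. wcut E m U (V - U) * wvol E m V / (wvol E m U * wvol E m (V - U)))
                         ` {U. U \<noteq> {} \<and> U \<subset> V})"

definition expander :: "real \<Rightarrow> 'a set \<Rightarrow> 'a set set \<Rightarrow> ('a set \<Rightarrow> real) \<Rightarrow> bool" where
  "expander lam V E m \<longleftrightarrow> 1 - cheeger V E m \<le> lam"

end

theory Submission
  imports Defs
begin

definition ff :: "'a set set \<Rightarrow> ('a set \<Rightarrow> real) \<Rightarrow> 'a \<Rightarrow> 'a \<Rightarrow> real" where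
  "ff E m u w = (if {u, w} \<in> E then m {u, w} else 0)"

lemma wcut_ff:
  assumes "finite U1" "finite U2"
  shows "wcut E m U1 U2 = (\<Sum>u\<in>U1. \<Sum>w\<in>U2. ff E m u w)"
proof -
  have "wcut E m U1 U2 = (\<Sum>p\<in>U1 \<times> U2. if {fst p, snd p} \<in> E then m {fst p, snd p} else 0)"
    unfolding wcut_def using assms by (simp add: sum.inter_filter)
  also have "\<dots> = (\<Sum>p\<in>U1 \<times> U2. ff E m (fst p) (snd p))" by (simp add: ff_def)
  also have "\<dots> = (\<Sum>u\<in>U1. \<Sum>w\<in>U2. ff E m u w)"
    by (simp add: sum.cartesian_product case_prod_beta)
  finally show ?thesis .
qed

lemma wdeg_ff:
  assumes G: "finite_graph V E" and v: "v \<in> V"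
  shows "wdeg E m v = (\<Sum>w\<in>V. ff E m v w)"
proof -
  have fV: "finite V" using G by (simp add: finite_graph_def)
  have "(\<Sum>w\<in>V. ff E m v w) = (\<Sum>w\<in>{w\<in>V. {v,w} \<in> E}. m {v,w})"
    unfolding ff_def using fV by (simp add: sum.inter_filter)
  also have "\<dots> = (\<Sum>e\<in>(\<lambda>w. {v,w}) ` {w\<in>V. {v,w} \<in> E}. m e)"
  proof (rule sum.reindex[symmetric, unfolded comp_def])
    show "inj_on (\<lambda>w. {v, w}) {w \<in> V. {v, w} \<in> E}"
      by (auto simp: inj_on_def doubleton_eq_iff)
  qed
  also have "(\<lambda>w. {v,w}) ` {w\<in>V. {v,w} \<in> E} = {e\<in>E. v \<in> e}"
  proof
    show "(\<lambda>w. {v,w}) ` {w\<in>V. {v,w} \<in> E} \<subseteq> {e\<in>E. v \<in> e}" by auto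
    show "{e\<in>E. v \<in> e} \<subseteq> (\<lambda>w. {v,w}) ` {w\<in>V. {v,w} \<in> E}"
    proof
      fix e assume e: "e \<in> {e\<in>E. v \<in> e}"
      then obtain x y where xy: "x \<in> V" "y \<in> V" "x \<noteq> y" "e = {x,y}"
        using G unfolding finite_graph_def by blast
      show "e \<in> (\<lambda>w. {v,w}) ` {w\<in>V. {v,w} \<in> E}"
      proof (cases "v = x")
        case True then show ?thesis using e xy by (auto intro!: image_eqI[of _ _ y])
      next
        case False then have "v = y" using e xy by auto
        then show ?thesis using e xy by (auto simp: insert_commute intro!: image_eqI[of _ _ x])
      qed
    qed
  qed
  finally show ?thesis unfolding wdeg_def by simp
qed

theorem lemma4p5:
  fixes V :: "'a set" and E :: "'a set set" and m :: "'a set \<Rightarrow> real" and \<beta> :: real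
  assumes "finite_graph V E"
    and "E \<noteq> {}"
    and "\<And>e. e \<in> E \<Longrightarrow> m e > 0"
    and "0 \<le> \<beta>" and "\<beta> < 1"
    and "\<And>v. v \<in> V \<Longrightarrow> wdeg E m v \<ge> (MAX e'\<in>E. m e') * (1 - \<beta>) * real (card V)"
  shows "cheeger V E m \<ge> 1 - 2 * \<beta> \<and> expander (2 * \<beta>) V E m"
proof -
  note G = assms(1)
  have fV: "finite V" using G by (simp add: finite_graph_def)
  have EV: "E \<subseteq> Pow V" using G unfolding finite_graph_def by auto
  have fE: "finite E" using EV fV finite_subset by blast
  define M where "M = (MAX e'\<in>E. m e')"
  have Mge: "m e \<le> M" if "e \<in> E" for e unfolding M_def using fE that by simp
  obtain e0 where e0: "e0 \<in> E" using assms(2) by blast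
  have Mpos: "M > 0" using Mge[OF e0] assms(3)[OF e0] by linarith
  have ff_le: "ff E m u w \<le> M" for u w using Mge Mpos by (simp add: ff_def)
  have ff_ge: "ff E m u w \<ge> 0" for u w using assms(3) by (simp add: ff_def less_imp_le)
  have ff_sym: "ff E m u w = ff E m w u" for u w by (simp add: ff_def insert_commute)
  define g where "g = 1 - \<beta>"
  have gpos: "g > 0" "g \<le> 1" using assms(4,5) by (auto simp: g_def)
  define n where "n = card V"
  have deg: "wdeg E m v \<ge> M * g * n" if "v \<in> V" for v
    using assms(6)[OF that] by (simp add: M_def g_def n_def)
  obtain x y where xy: "x \<in> V" "y \<in> V" "x \<noteq> y" using e0 G unfolding finite_graph_def by blast
  have npos: "n > 0" unfolding n_def using fV xy by (auto simp: card_gt_0_iff)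
  have key: "wcut E m U (V - U) * wvol E m V / (wvol E m U * wvol E m (V - U)) \<ge> 1 - 2 * \<beta>"
    if U: "U \<noteq> {}" "U \<subset> V" for U
  proof -
    define W where "W = V - U"
    have fU: "finite U" and fW: "finite W" using U fV W_def finite_subset by auto
    have UW: "U \<inter> W = {}" "U \<union> W = V" using U W_def by auto
    have Wne: "W \<noteq> {}" using U W_def by auto
    define k where "k = card U"
    have nk: "n = k + card W" unfolding n_def k_def using card_Un_disjoint[OF fU fW UW(1)] UW(2) by simp
    define a where "a = wvol E m U"
    define b where "b = wvol E m W"
    define c where "c = wcut E m U W"
    have volcut: "wvol E m X = wcut E m X V" if "X \<subseteq> V" for X
    proof -
      have fX: "finite X" using that fV finite_subset by auto
      have "wvol E m X = (\<Sum>v\<in>X. \<Sum>w\<in>V. ff E m v w)"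
        unfolding wvol_def using that by (intro sum.cong) (auto intro: wdeg_ff[OF G])
      then show ?thesis using wcut_ff[OF fX fV] by simp
    qed
    have sumV: "wcut E m X V = wcut E m X X + wcut E m X Y"
      if "X \<subseteq> V" "X \<inter> Y = {}" "X \<union> Y = V" for X Y
    proof -
      have fX: "finite X" "finite Y" using that fV finite_subset by auto
      have "wcut E m X V = (\<Sum>u\<in>X. \<Sum>w\<in>X \<union> Y. ff E m u w)"
        using wcut_ff[OF fX(1) fV] that by simp
      also have "\<dots> = (\<Sum>u\<in>X. (\<Sum>w\<in>X. ff E m u w) + (\<Sum>w\<in>Y. ff E m u w))"
        using fX that(2) by (simp add: sum.union_disjoint)
      also have "\<dots> = wcut E m X X + wcut E m X Y"
        using wcut_ff[OF fX(1) fX(1)] wcut_ff[OF fX(1) fX(2)] by (simp add: sum.distrib)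
      finally show ?thesis .
    qed
    have inner: "wcut E m X X \<le> M * card X * card X" if "finite X" for X
    proof -
      have "wcut E m X X = (\<Sum>u\<in>X. \<Sum>w\<in>X. ff E m u w)" using wcut_ff that by blast
      also have "\<dots> \<le> (\<Sum>u\<in>X. \<Sum>w\<in>X. M)" by (intro sum_mono ff_le)
      finally show ?thesis by (simp add: mult_ac)
    qed
    have csym: "wcut E m W U = c"
    proof -
      have "wcut E m W U = (\<Sum>u\<in>W. \<Sum>w\<in>U. ff E m u w)" using wcut_ff[OF fW fU] .
      also have "\<dots> = (\<Sum>w\<in>U. \<Sum>u\<in>W. ff E m u w)" by (rule sum.swap)
      also have "\<dots> = (\<Sum>w\<in>U. \<Sum>u\<in>W. ff E m w u)" using ff_sym by simp
      also have "\<dots> = c" unfolding c_def using wcut_ff[OF fU fW] by simp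
      finally show ?thesis .
    qed
    have cge: "c \<ge> 0" unfolding c_def using wcut_ff[OF fU fW] ff_ge by (simp add: sum_nonneg)
    have a1: "a = wcut E m U U + c" unfolding a_def c_def
      using volcut[of U] sumV[of U W] UW U by auto
    have b1: "b = wcut E m W W + c" unfolding b_def
      using volcut[of W] sumV[of W U] UW W_def csym by auto
    have alow: "a \<ge> M * g * n * k"
    proof -
      have "(\<Sum>v\<in>U. M * g * n) \<le> (\<Sum>v\<in>U. wdeg E m v)" using deg U by (intro sum_mono) auto
      thus ?thesis by (simp add: a_def wvol_def k_def mult_ac)
    qed
    have blow: "b \<ge> M * g * n * card W"
    proof -
      have "(\<Sum>v\<in>W. M * g * n) \<le> (\<Sum>v\<in>W. wdeg E m v)" using deg W_def by (intro sum_mono) auto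
      thus ?thesis by (simp add: b_def wvol_def mult_ac)
    qed
    have kpos: "k > 0" unfolding k_def using U(1) fU by (simp add: card_gt_0_iff)
    have wpos: "card W > 0" using Wne fW by (simp add: card_gt_0_iff)
    have "M * g * n * k > 0" using Mpos gpos npos kpos by (intro mult_pos_pos) auto
    hence apos: "a > 0" using alow by linarith
    have "M * g * n * card W > 0" using Mpos gpos npos wpos by (intro mult_pos_pos) auto
    hence bpos: "b > 0" using blow by linarith
    have ca: "c * (g * n) \<ge> a * (g * n - k)"
    proof -
      have "wcut E m U U * (g * n) \<le> M * k * k * (g * n)"
        using inner[OF fU] gpos npos k_def by (simp add: mult_right_mono)
      also have "\<dots> = (M * g * n * k) * k" by (simp add: algebra_simps)
      also have "\<dots> \<le> a * k" using alow by (simp add: mult_right_mono)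
      finally have X: "wcut E m U U * (g * n) \<le> a * k" .
      have "c * (g * n) = a * (g * n) - wcut E m U U * (g * n)" using a1 by (simp add: distrib_right)
      moreover have "a * (g * n - k) = a * (g * n) - a * k" by (simp add: right_diff_distrib)
      ultimately show ?thesis using X by linarith
    qed
    have cb: "c * (g * n) \<ge> b * (g * n - card W)"
    proof -
      have "wcut E m W W * (g * n) \<le> M * card W * card W * (g * n)"
        using inner[OF fW] gpos npos by (simp add: mult_right_mono)
      also have "\<dots> = (M * g * n * card W) * card W" by (simp add: algebra_simps)
      also have "\<dots> \<le> b * card W" using blow by (simp add: mult_right_mono)
      finally have X: "wcut E m W W * (g * n) \<le> b * card W" .
      have "c * (g * n) = b * (g * n) - wcut E m W W * (g * n)" using b1 by (simp add: distrib_right)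
      moreover have "b * (g * n - card W) = b * (g * n) - b * card W" by (simp add: right_diff_distrib)
      ultimately show ?thesis using X by linarith
    qed
    have sum: "c * (a + b) * (g * n) \<ge> a * b * (2 * g * n - n)"
    proof -
      have "c * (a + b) * (g * n) = b * (c * (g * n)) + a * (c * (g * n))"
        by (simp add: algebra_simps)
      also have "\<dots> \<ge> b * (a * (g * n - k)) + a * (b * (g * n - card W))"
        using ca cb apos bpos by (intro add_mono mult_left_mono) auto
      moreover have nr: "real n = real k + real (card W)" using nk by simp
      moreover have "b * (a * (g * n - k)) + a * (b * (g * n - card W)) = a * b * (2 * g * n - n)"
        unfolding nr by (simp add: algebra_simps)
      ultimately show ?thesis by linarith
    qed
    have main: "c * (a + b) \<ge> (1 - 2 * \<beta>) * (a * b)"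
    proof (cases "1 - 2 * \<beta> \<le> 0")
      case True
      have ab: "a * b \<ge> 0" using apos bpos by simp
      have "(1 - 2 * \<beta>) * (a * b) \<le> 0" by (rule mult_nonpos_nonneg[OF True ab])
      also have "0 \<le> c * (a + b)" using cge apos bpos by simp
      finally show ?thesis .
    next
      case False
      have gn: "g * n > 0" using gpos npos by simp
      have teq: "1 - 2 * \<beta> = 2 * g - 1" by (simp add: g_def)
      have abn: "a * b * n \<ge> 0" using apos bpos by simp
      have "(1 - 2 * \<beta>) * g \<le> (1 - 2 * \<beta>) * 1"
        using False gpos by (intro mult_left_mono) auto
      hence tg: "(2 * g - 1) * g \<le> 2 * g - 1" using teq by simp
      have "(1 - 2 * \<beta>) * (a * b) * (g * n) = (a * b * n) * ((2 * g - 1) * g)"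
        unfolding teq by (simp add: mult_ac)
      also have "\<dots> \<le> (a * b * n) * (2 * g - 1)" by (rule mult_left_mono[OF tg abn])
      also have "\<dots> = a * b * (2 * g * n - n)" by (simp add: algebra_simps)
      also have "\<dots> \<le> c * (a + b) * (g * n)" using sum .
      finally show ?thesis using gn mult_le_cancel_right_pos by blast
    qed
    have volV: "wvol E m V = a + b"
    proof -
      have "wvol E m V = wvol E m (U \<union> W)" using UW by simp
      also have "\<dots> = a + b" unfolding a_def b_def wvol_def
        by (rule sum.union_disjoint[OF fU fW UW(1)])
      finally show ?thesis .
    qed
    have ab: "a * b > 0" using apos bpos by (rule mult_pos_pos)
    have "1 - 2 * \<beta> \<le> c * (a + b) / (a * b)"
      by (subst pos_le_divide_eq[OF ab]) (rule main)
    moreover have "wcut E m U (V - U) = c" by (simp add: c_def W_def)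
    moreover have "wvol E m U = a" by (simp add: a_def)
    moreover have "wvol E m (V - U) = b" by (simp add: b_def W_def)
    ultimately show ?thesis using volV by (simp only:)
  qed
  let ?S = "{U. U \<noteq> {} \<and> U \<subset> V}"
  have SP: "?S \<subseteq> Pow V" by blast
  have fS: "finite ?S" using finite_subset[OF SP] fV by simp
  have "{x} \<subset> V" using xy by blast
  hence "{x} \<in> ?S" by simp
  hence neS: "?S \<noteq> {}" by blast
  define f where "f = (\<lambda>U. wcut E m U (V - U) * wvol E m V / (wvol E m U * wvol E m (V - U)))"
  have "1 - 2 * \<beta> \<le> Min (f ` ?S)"
  proof (subst Min_ge_iff)
    show "finite (f ` ?S)" using fS by (rule finite_imageI)
    show "f ` ?S \<noteq> {}" using neS by simp
    show "\<forall>a\<in>f ` ?S. 1 - 2 * \<beta> \<le> a"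
    proof
      fix r assume "r \<in> f ` ?S"
      then obtain U where U: "U \<in> ?S" and r: "r = f U" by blast
      from U have "U \<noteq> {}" "U \<subset> V" by auto
      from key[OF this] show "1 - 2 * \<beta> \<le> r" unfolding r f_def .
    qed
  qed
  hence "cheeger V E m \<ge> 1 - 2 * \<beta>" unfolding cheeger_def f_def .
  thus ?thesis unfolding expander_def by simp
qed

end
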